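(* Let $1 \le n \le N$ be integers, let $\mathcal{X} = \{1,\ldots,N\}^n$, let $P$ be the uniform distribution on $\mathcal{X}$ (weights $1/N^n$), and let $Q$ be the uniform distribution on the set $\mathcal{X}_*$ of all $x = (x_1,\ldots,x_n) \in \mathcal{X}$ with pairwise distinct components (weights $1/[N]_n$ on $\mathcal{X}_*$ and $0$ elsewhere). Then \[ \frac{n(n-1)}{2N} \ \le \ \log \rho(Q,P) \ \le \ - \frac{n}{2} \log \Bigl( 1 - \frac{n-1}{N} \Bigr) . \]
   Context: For real $a$ and integers $m \ge 1$, $[a]_m := \prod_{i=0}^{m-1}(a-i)$, and $[a]_0 := 1$. For probability measures $Q,P$ on $(\mathcal{X},\mathcal{A})$, $\rho(Q,P) := \sup_{A \in \mathcal{A}} Q(A)/P(A)$ with the conventions $0/0 := 0$ and $a/0 := \infty$ for $a>0$. *)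

theory Defs
  imports "HOL-Probability.Probability"
begin

definition rho :: "'a measure \<Rightarrow> 'a measure \<Rightarrow> ereal" where
  "rho Q P = (SUP A \<in> sets P.
      (if measure P A = 0 then (if measure Q A = 0 then 0 else \<infinity>)
       else ereal (measure Q A / measure P A)))"

definition cube :: "nat \<Rightarrow> nat \<Rightarrow> nat list set" where
  "cube N n = {x. length x = n \<and> set x \<subseteq> {1..N}}"

definition cube_distinct :: "nat \<Rightarrow> nat \<Rightarrow> nat list set" where
  "cube_distinct N n = {x \<in> cube N n. distinct x}"

end

theory Submission
  imports Defs
begin

lemma prod_top: "k \<le> N \<Longrightarrow> real (\<Prod>{N - k + 1..N}) = (\<Prod>i<k. real (N - i))"
proof (induction k)
  case 0 then show ?case by simp
next
  case (Suc k)
  have "{N - Suc k + 1..N} = insert (N - k) {N - k + 1..N}" using Suc.prems by auto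
  then have "\<Prod>{N - Suc k + 1..N} = (N - k) * \<Prod>{N - k + 1..N}" by simp
  then show ?case using Suc by (simp add: mult.commute)
qed

lemma sum_id_real: "(\<Sum>i<n. real i) = real n * (real n - 1) / 2"
  by (induction n) (auto simp: field_simps)

theorem mainTheorem2:
  fixes n N :: nat
  assumes "1 \<le> n" and "n \<le> N"
  shows "\<exists>r::real. r > 0 \<and>
    rho (measure_pmf (pmf_of_set (cube_distinct N n))) (measure_pmf (pmf_of_set (cube N n))) = ereal r \<and>
    real n * (real n - 1) / (2 * real N) \<le> ln r \<and>
    ln r \<le> - (real n / 2) * ln (1 - (real n - 1) / real N)"
proof -
  define C where "C = cube N n"
  define D where "D = cube_distinct N n"
  have Ceq: "C = {xs. set xs \<subseteq> {1..N} \<and> length xs = n}" unfolding C_def cube_def by auto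
  have Deq: "D = {xs. length xs = n \<and> distinct xs \<and> set xs \<subseteq> {1..N}}"
    unfolding D_def cube_distinct_def cube_def by auto
  have finC: "finite C" unfolding Ceq by (rule finite_lists_length_eq) simp
  have cardC: "card C = N ^ n" unfolding Ceq by (subst card_lists_length_eq) simp_all
  have cardD: "card D = \<Prod>{N - n + 1..N}" unfolding Deq
    by (subst card_lists_distinct_length_eq) (use assms in simp_all)
  have DC: "D \<subseteq> C" unfolding D_def C_def cube_distinct_def by auto
  have finD: "finite D" using finC DC finite_subset by blast
  have Npos: "N > 0" using assms by simp
  have posi: "\<And>i. i < n \<Longrightarrow> real (N - i) > 0" using assms by auto
  have cD: "real (card D) = (\<Prod>i<n. real (N - i))" unfolding cardD using prod_top assms(2) by blast
  have cDpos: "real (card D) > 0" unfolding cD by (rule prod_pos) (use posi in auto)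
  have cCpos: "real (card C) > 0" unfolding cardC using Npos by simp
  have Dne: "D \<noteq> {}" using cDpos by auto
  have Cne: "C \<noteq> {}" using cCpos by auto
  define r where "r = real (card C) / real (card D)"
  have rpos: "r > 0" unfolding r_def using cDpos cCpos by simp
  have mP: "\<And>A. measure (measure_pmf (pmf_of_set C)) A = card (C \<inter> A) / card C"
    by (rule measure_pmf_of_set[OF Cne finC])
  have mQ: "\<And>A. measure (measure_pmf (pmf_of_set D)) A = card (D \<inter> A) / card D"
    by (rule measure_pmf_of_set[OF Dne finD])
  define f where "f A = (if measure (measure_pmf (pmf_of_set C)) A = 0 then
        (if measure (measure_pmf (pmf_of_set D)) A = 0 then 0 else \<infinity>)
       else ereal (measure (measure_pmf (pmf_of_set D)) A / measure (measure_pmf (pmf_of_set C)) A))" for A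
  have fle: "f A \<le> ereal r" for A
  proof (cases "card (C \<inter> A) = 0")
    case True
    then have "C \<inter> A = {}" using finC by simp
    then have "D \<inter> A = {}" using DC by auto
    then show ?thesis using True rpos unfolding f_def mP mQ by simp
  next
    case False
    have le: "real (card (D \<inter> A)) \<le> real (card (C \<inter> A))"
      using DC finC by (meson card_mono finite_Int inf_mono order_refl of_nat_le_iff)
    have "(card (D \<inter> A) / card D) / (card (C \<inter> A) / card C) =
          (card (D \<inter> A) / card (C \<inter> A)) * r"
      unfolding r_def using cDpos cCpos False by (simp add: field_simps)
    also have "\<dots> \<le> 1 * r"
      using le False rpos by (intro mult_right_mono) (auto simp: divide_le_eq_1)
    finally show ?thesis using False cCpos unfolding f_def mP mQ by simp
  qed
  have fD: "f D = ereal r"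
  proof -
    have "C \<inter> D = D" using DC by auto
    then show ?thesis using cDpos cCpos unfolding f_def mP mQ r_def by (simp add: field_simps)
  qed
  have rho_eq: "rho (measure_pmf (pmf_of_set D)) (measure_pmf (pmf_of_set C)) = ereal r"
  proof -
    have "rho (measure_pmf (pmf_of_set D)) (measure_pmf (pmf_of_set C)) = (SUP A\<in>UNIV. f A)"
      unfolding rho_def f_def by simp
    also have "\<dots> = ereal r"
    proof (rule antisym)
      show "(SUP A\<in>UNIV. f A) \<le> ereal r" by (rule SUP_least) (rule fle)
      show "ereal r \<le> (SUP A\<in>UNIV. f A)" using fD by (metis SUP_upper UNIV_I)
    qed
    finally show ?thesis .
  qed
  define b where "b i = ln (1 - real i / real N)" for i
  have lnr: "ln r = - (\<Sum>i<n. b i)"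
  proof -
    have "r = (\<Prod>i<n. real N / real (N - i))"
      unfolding r_def cD cardC by (simp add: prod_dividef)
    then have "ln r = (\<Sum>i<n. ln (real N / real (N - i)))"
      using posi Npos by (simp only:) (subst ln_prod, auto, fastforce)
    also have "\<dots> = (\<Sum>i<n. - b i)"
    proof (rule sum.cong[OF refl])
      fix i assume "i \<in> {..<n}"
      then have p: "real (N - i) > 0" "i \<le> N" using posi assms by auto
      have "1 - real i / real N = real (N - i) / real N" using p Npos by (simp add: field_simps of_nat_diff)
      then show "ln (real N / real (N - i)) = - b i" unfolding b_def using p Npos
        by (simp add: ln_div)
    qed
    finally show ?thesis by (simp add: sum_negf)
  qed
  have lower: "real n * (real n - 1) / (2 * real N) \<le> ln r"
  proof -
    have "b i \<le> - (real i / real N)" if "i < n" for i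
    proof -
      have "1 - real i / real N > 0" using that assms Npos by (simp add: field_simps)
      from ln_le_minus_one[OF this] show ?thesis unfolding b_def by simp
    qed
    then have "(\<Sum>i<n. b i) \<le> (\<Sum>i<n. - (real i / real N))" by (intro sum_mono) auto
    also have "\<dots> = - ((\<Sum>i<n. real i) / real N)" by (simp add: sum_negf sum_divide_distrib)
    finally show ?thesis unfolding lnr sum_id_real by simp
  qed
  have upper: "ln r \<le> - (real n / 2) * ln (1 - (real n - 1) / real N)"
  proof -
    define c where "c = ln (1 - (real n - 1) / real N)"
    have pair: "c \<le> b i + b (n - Suc i)" if "i < n" for i
    proof -
      have x: "1 - real i / real N > 0" using that assms Npos by (simp add: field_simps)
      have y: "1 - real (n - Suc i) / real N > 0" using that assms Npos by (simp add: field_simps)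
      have rn: "real (n - Suc i) = real n - 1 - real i" using that by (simp add: of_nat_diff)
      have z: "1 - (real n - 1) / real N > 0" using assms Npos by (simp add: field_simps)
      have "1 - (real n - 1) / real N \<le> (1 - real i / real N) * (1 - real (n - Suc i) / real N)"
      proof -
        have "(1 - real i / real N) * (1 - real (n - Suc i) / real N)
              = 1 - (real n - 1) / real N + real i * real (n - Suc i) / (real N * real N)"
          unfolding rn using Npos by (simp add: field_simps)
        moreover have "real i * real (n - Suc i) / (real N * real N) \<ge> 0" by simp
        ultimately show ?thesis by linarith
      qed
      then have "c \<le> ln ((1 - real i / real N) * (1 - real (n - Suc i) / real N))"
        unfolding c_def using z by simp
      also have "\<dots> = b i + b (n - Suc i)" unfolding b_def by (rule ln_mult_pos[OF x y])
      finally show ?thesis .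
    qed
    have "real n * c = (\<Sum>i<n. c)" by simp
    also have "\<dots> \<le> (\<Sum>i<n. b i + b (n - Suc i))" by (intro sum_mono) (use pair in auto)
    also have "\<dots> = (\<Sum>i<n. b i) + (\<Sum>i<n. b (n - Suc i))" by (simp add: sum.distrib)
    also have "(\<Sum>i<n. b (n - Suc i)) = (\<Sum>i<n. b i)" by (rule sum.nat_diff_reindex)
    finally have "real n * c \<le> 2 * (\<Sum>i<n. b i)" by simp
    then show ?thesis unfolding lnr c_def by simp
  qed
  show ?thesis
    using rpos rho_eq lower upper unfolding C_def D_def by blast
qed

end
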